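(* Let $a\in\mathbb{R}$, $b\in(a,\infty)$, $f\in C^1([a,b],\mathbb{R})$, $p\in C([a,b],\mathbb{R})$ satisfy for all $x\in[a,b]$ that $f'(x)>0\le p(x)$ and $\int_a^b|p(y)|\,\mathrm{d}y>0$, assume that $f$ is strictly convex, let $g\colon[a,b]\to\mathbb{R}$ be affine linear, assume $\int_a^b(f(x)-g(x))p(x)\,\mathrm{d}x=0$, and let $\lambda=\max\{|f(x)-g(x)|\colon x\in\{a,b\},\ g(x)<f(x)\}$ (under these hypotheses this set is nonempty). Then $$\int_a^b(f(x)-g(x))^2p(x)\,\mathrm{d}x\le\lambda\Big[\lambda+\sup_{x\in[a,b]}f'(x)\Big]\Big[\sup_{x\in[a,b]}p(x)\Big](b-a).$$ *)

theory Defs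
  imports "HOL-Analysis.Analysis"
begin

definition strictly_convex_on :: "real set \<Rightarrow> (real \<Rightarrow> real) \<Rightarrow> bool" where
  "strictly_convex_on S f \<longleftrightarrow>
     (\<forall>x\<in>S. \<forall>y\<in>S. \<forall>t::real. x \<noteq> y \<and> 0 < t \<and> t < 1 \<longrightarrow>
        f ((1 - t) * x + t * y) < (1 - t) * f x + t * f y)"

end

theory Submission
  imports Defs
begin

lemma right_bound:
  fixes H p :: "real \<Rightarrow> real" and x0 b P :: real
  assumes xb: "x0 \<le> b" and Hc: "continuous_on {x0..b} H" and pc: "continuous_on {x0..b} p"
    and pb: "\<And>x. x \<in> {x0..b} \<Longrightarrow> 0 \<le> p x \<and> p x \<le> P"
    and Hmin: "\<And>x. x \<in> {x0..b} \<Longrightarrow> H x0 \<le> H x"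
    and H0: "H x0 \<le> 0"
    and chord: "\<And>x. x \<in> {x0..b} \<Longrightarrow> x0 < b \<Longrightarrow> H x \<le> ((b-x)*H x0 + (x-x0)*H b)/(b-x0)"
  shows "integral {x0..b} (\<lambda>x. H x * (H x - H x0) * p x) \<le> P * (max (H b) 0)^2 * (b-x0)"
proof -
  define F where "F = (\<lambda>x. H x * (H x - H x0) * p x)"
  have Fc: "continuous_on {x0..b} F" unfolding F_def
    by (intro continuous_intros Hc pc)
  have Fi: "F integrable_on {x0..b}" using Fc integrable_continuous_interval by blast
  show ?thesis
  proof (cases "H b \<le> 0")
    case True
    have "integral {x0..b} F \<le> integral {x0..b} (\<lambda>x. 0)"
    proof (rule integral_le[OF Fi])
      fix x assume x: "x \<in> {x0..b}"
      have "H x \<le> 0"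
      proof (cases "x0 < b")
        case True
        have "(b-x)*H x0 + (x-x0)*H b \<le> 0" using x H0 \<open>H b \<le> 0\<close>
          by (simp add: add_nonpos_nonpos mult_nonneg_nonpos)
        then have "((b-x)*H x0 + (x-x0)*H b)/(b-x0) \<le> 0" using True
          by (simp add: divide_nonpos_pos)
        then show ?thesis using chord[OF x True] by linarith
      next
        case False
        then have "x = x0" using x xb by auto
        then show ?thesis using H0 by simp
      qed
      moreover have "H x - H x0 \<ge> 0" using Hmin[OF x] by simp
      moreover have "p x \<ge> 0" using pb[OF x] by simp
      ultimately show "F x \<le> 0" unfolding F_def
        by (simp add: mult_nonpos_nonneg)
    qed auto
    then show ?thesis using True by (simp add: F_def)
  next
    case False
    define \<beta> where "\<beta> = H b"
    define m where "m = - H x0"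
    have bp: "\<beta> > 0" using False \<beta>_def by simp
    have m0: "m \<ge> 0" using H0 m_def by simp
    have xlt: "x0 < b" using bp H0 xb \<beta>_def by (cases "x0 = b") auto
    define w where "w = x0 + (b-x0)*m/(\<beta>+m)"
    have bm: "\<beta> + m > 0" using bp m0 by simp
    have "(b-x0)*m/(\<beta>+m) \<ge> 0" using xlt m0 bm by simp
    then have xw: "x0 \<le> w" unfolding w_def by simp
    have "(b-x0)*m/(\<beta>+m) \<le> (b - x0)" using xlt m0 bm bp
      by (simp add: divide_le_eq mult_left_mono)
    then have wb: "w \<le> b" unfolding w_def by simp
    have bw: "b - w = (b-x0)*\<beta>/(\<beta>+m)" unfolding w_def using bm
      by (simp add: field_simps)
    have I1: "integral {x0..w} F \<le> 0"
    proof -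
      have "integral {x0..w} F \<le> integral {x0..w} (\<lambda>x. 0)"
      proof (rule integral_le)
        show "F integrable_on {x0..w}" using Fi integrable_on_subinterval xw wb by fastforce
        fix x assume x: "x \<in> {x0..w}"
        then have x': "x \<in> {x0..b}" using wb by auto
        have "(x - x0)*(\<beta>+m) \<le> (w-x0)*(\<beta>+m)" using x bm by (simp add: mult_right_mono)
        also have "\<dots> = (b-x0)*m" unfolding w_def using bm by simp
        finally have "(b-x)*(-m) + (x-x0)*\<beta> \<le> 0" by (simp add: algebra_simps)
        then have "((b-x)*H x0 + (x-x0)*H b)/(b-x0) \<le> 0" using xlt
          by (simp add: divide_nonpos_pos m_def \<beta>_def)
        then have "H x \<le> 0" using chord[OF x' xlt] by linarith
        moreover have "H x - H x0 \<ge> 0" using Hmin[OF x'] by simp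
        moreover have "p x \<ge> 0" using pb[OF x'] by simp
        ultimately show "F x \<le> 0" unfolding F_def
          by (simp add: mult_nonpos_nonneg)
      qed auto
      then show ?thesis by simp
    qed
    have I2: "integral {w..b} F \<le> \<beta>*(\<beta>+m)*P*(b-w)"
    proof -
      have "integral {w..b} F \<le> integral {w..b} (\<lambda>x. \<beta>*(\<beta>+m)*P)"
      proof (rule integral_le)
        show "F integrable_on {w..b}" using Fi integrable_on_subinterval xw wb by fastforce
        fix x assume x: "x \<in> {w..b}"
        then have x': "x \<in> {x0..b}" using xw by auto
        have "(b-x)*H x0 + (x-x0)*H b \<le> (b-x)*H b + (x-x0)*H b"
          using x' H0 bp \<beta>_def by (intro add_mono mult_left_mono) auto
        also have "\<dots> = (b-x0)*\<beta>" by (simp add: \<beta>_def algebra_simps)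
        finally have "((b-x)*H x0 + (x-x0)*H b)/(b-x0) \<le> \<beta>" using xlt
          by (simp add: divide_le_eq mult.commute)
        then have hb: "H x \<le> \<beta>" using chord[OF x' xlt] by linarith
        have hm: "0 \<le> H x + m" using Hmin[OF x'] m_def by simp
        have q: "H x * (H x + m) \<le> \<beta>*(\<beta>+m)"
        proof (cases "H x \<ge> 0")
          case True
          then show ?thesis using hb hm bm by (intro mult_mono) auto
        next
          case False
          then have "H x * (H x + m) \<le> 0" using hm by (simp add: mult_nonpos_nonneg)
          then show ?thesis using bp bm by (smt (verit) mult_pos_pos)
        qed
        have "F x = H x * (H x + m) * p x" unfolding F_def m_def by simp
        also have "\<dots> \<le> \<beta>*(\<beta>+m) * p x" using q pb[OF x'] by (intro mult_right_mono) auto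
        also have "\<dots> \<le> \<beta>*(\<beta>+m) * P" using pb[OF x'] bp bm by (intro mult_left_mono) auto
        finally show "F x \<le> \<beta>*(\<beta>+m)*P" .
      qed auto
      then show ?thesis using wb by (simp add: algebra_simps)
    qed
    have "integral {x0..b} F = integral {x0..w} F + integral {w..b} F"
      using Henstock_Kurzweil_Integration.integral_combine[OF xw wb Fi] by simp
    also have "\<dots> \<le> \<beta>*(\<beta>+m)*P*(b-w)" using I1 I2 by linarith
    also have "\<dots> = P * \<beta>^2 * (b-x0)" unfolding bw using bm by (simp add: field_simps power2_eq_square)
    finally show ?thesis using bp \<beta>_def F_def by simp
  qed
qed

lemma left_bound:
  fixes H p :: "real \<Rightarrow> real" and x0 a P :: real
  assumes ax: "a \<le> x0" and Hc: "continuous_on {a..x0} H" and pc: "continuous_on {a..x0} p"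
    and pb: "\<And>x. x \<in> {a..x0} \<Longrightarrow> 0 \<le> p x \<and> p x \<le> P"
    and Hmin: "\<And>x. x \<in> {a..x0} \<Longrightarrow> H x0 \<le> H x"
    and H0: "H x0 \<le> 0"
    and chord: "\<And>x. x \<in> {a..x0} \<Longrightarrow> a < x0 \<Longrightarrow> H x \<le> ((x0-x)*H a + (x-a)*H x0)/(x0-a)"
  shows "integral {a..x0} (\<lambda>x. H x * (H x - H x0) * p x) \<le> P * (max (H a) 0)^2 * (x0-a)"
proof -
  have neg: "y \<in> {-x0..-a} \<longleftrightarrow> -y \<in> {a..x0}" for y by auto
  have c1: "continuous_on {-x0..-a} (\<lambda>y. H (-y))"
    by (rule continuous_on_compose2[OF Hc]) (auto intro: continuous_intros)
  have c2: "continuous_on {-x0..-a} (\<lambda>y. p (-y))"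
    by (rule continuous_on_compose2[OF pc]) (auto intro: continuous_intros)
  have "integral {-x0..-a} (\<lambda>y. H (-y) * (H (-y) - H (-(-x0))) * p (-y)) \<le> P * (max (H (-(-a))) 0)^2 * (-a - -x0)"
  proof (rule right_bound[where H="\<lambda>y. H (-y)" and p="\<lambda>y. p (-y)", OF _ c1 c2])
    show "- x0 \<le> - a" using ax by simp
    show "0 \<le> p (- x) \<and> p (- x) \<le> P" if "x \<in> {- x0..- a}" for x using pb that neg by blast
    show "H (- (- x0)) \<le> H (- x)" if "x \<in> {- x0..- a}" for x using Hmin that neg by auto
    show "H (- (- x0)) \<le> 0" using H0 by simp
    show "H (- x) \<le> ((- a - x) * H (- (- x0)) + (x - (- x0)) * H (- (- a))) / (- a - (- x0))"
      if "x \<in> {- x0..- a}" "- x0 < - a" for x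
      using chord[of "-x"] that neg by (simp add: algebra_simps)
  qed
  then show ?thesis
    using Henstock_Kurzweil_Integration.integral_reflect_real[of x0 a "\<lambda>x. H x * (H x - H x0) * p x"]
    by simp
qed

lemma sc_chord:
  assumes sc: "strictly_convex_on S f" and u: "u \<in> S" and v: "v \<in> S" and uv: "u < x" "x < v"
  shows "f x < ((v-x)*f u + (x-u)*f v)/(v-u)"
proof -
  define t where "t = (x-u)/(v-u)"
  have t0: "0 < t" and t1: "t < 1" using uv by (auto simp: t_def field_simps)
  have vu: "v - u \<noteq> 0" using uv by simp
  have "(1 - t) * u + t * v = u + t * (v - u)" by (simp add: algebra_simps)
  also have "\<dots> = x" using vu by (simp add: t_def)
  finally have xe: "(1 - t) * u + t * v = x" .
  have "f ((1 - t) * u + t * v) < (1 - t) * f u + t * f v"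
    using sc u v uv t0 t1 unfolding strictly_convex_on_def by force
  also have "1 - t = (v-x)/(v-u)" using vu by (simp add: t_def field_simps)
  then have "(1 - t) * f u + t * f v = ((v-x)*f u)/(v-u) + ((x-u)*f v)/(v-u)"
    by (simp add: t_def)
  also have "\<dots> = ((v-x)*f u + (x-u)*f v)/(v-u)" by (simp add: add_divide_distrib)
  finally show ?thesis using xe by simp
qed

lemma affine_chord:
  fixes c e x u v :: real
  assumes "v \<noteq> u"
  shows "c * x + e = ((v - x) * (c * u + e) + (x - u) * (c * v + e)) / (v - u)"
  using assms by (simp add: field_simps)

theorem lemma3p6:
  fixes a b :: real and f f' p g :: "real \<Rightarrow> real"
  assumes ab: "a < b"
    and f_deriv: "\<And>x. x \<in> {a..b} \<Longrightarrow> (f has_real_derivative f' x) (at x within {a..b})"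
    and f'_cont: "continuous_on {a..b} f'"
    and p_cont: "continuous_on {a..b} p"
    and f'_pos: "\<And>x. x \<in> {a..b} \<Longrightarrow> f' x > 0"
    and p_nonneg: "\<And>x. x \<in> {a..b} \<Longrightarrow> 0 \<le> p x"
    and p_int_pos: "integral {a..b} (\<lambda>y. \<bar>p y\<bar>) > 0"
    and f_sconv: "strictly_convex_on {a..b} f"
    and g_affine: "\<exists>c d. \<forall>x\<in>{a..b}. g x = c * x + d"
    and orth: "integral {a..b} (\<lambda>x. (f x - g x) * p x) = 0"
  shows "integral {a..b} (\<lambda>x. (f x - g x)^2 * p x)
           \<le> (let lam = Max {\<bar>f x - g x\<bar> | x. x \<in> {a, b} \<and> g x < f x}
              in lam * (lam + (SUP x\<in>{a..b}. f' x)) * (SUP x\<in>{a..b}. p x) * (b - a))"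
proof -
  obtain c e where ge: "\<And>x. x \<in> {a..b} \<Longrightarrow> g x = c * x + e" using g_affine by blast
  define h where "h = (\<lambda>x. f x - g x)"
  have fc: "continuous_on {a..b} f" using f_deriv DERIV_continuous_on by blast
  have gc: "continuous_on {a..b} g"
    using continuous_on_cong[of "{a..b}" "{a..b}" g "\<lambda>x. c * x + e"] ge
    by (auto intro: continuous_intros)
  have hc: "continuous_on {a..b} h" unfolding h_def using fc gc by (intro continuous_intros)
  have hs: "h x < ((v-x)*h u + (x-u)*h v)/(v-u)"
    if "u \<in> {a..b}" "v \<in> {a..b}" "u < x" "x < v" for u v x
  proof -
    have x: "x \<in> {a..b}" using that by auto
    have "f x < ((v-x)*f u + (x-u)*f v)/(v-u)" using sc_chord[OF f_sconv that] .
    moreover have "g x = ((v-x)*g u + (x-u)*g v)/(v-u)"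
      using ge[OF x] ge[OF that(1)] ge[OF that(2)] affine_chord[of v u c x e] that by simp
    ultimately have "f x - g x < ((v-x)*f u + (x-u)*f v)/(v-u) - ((v-x)*g u + (x-u)*g v)/(v-u)"
      by simp
    also have "\<dots> = ((v-x)*h u + (x-u)*h v)/(v-u)" unfolding h_def
      by (simp add: diff_divide_distrib[symmetric] algebra_simps)
    finally show ?thesis unfolding h_def .
  qed
  have hl: "h x \<le> ((v-x)*h u + (x-u)*h v)/(v-u)"
    if uvx: "u \<in> {a..b}" "v \<in> {a..b}" "u \<le> x" "x \<le> v" "u < v" for u v x
  proof -
    have vu: "v - u \<noteq> 0" using uvx by simp
    consider "x = u" | "x = v" | "u < x \<and> x < v" using uvx by linarith
    then show ?thesis
    proof cases
      case 1 then show ?thesis using vu by simp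
    next
      case 2 then show ?thesis using vu by simp
    next
      case 3 then show ?thesis using hs[OF uvx(1,2)] by (simp add: less_imp_le)
    qed
  qed
  obtain x0 where x0: "x0 \<in> {a..b}" and x0min: "\<And>y. y \<in> {a..b} \<Longrightarrow> h x0 \<le> h y"
    using continuous_attains_inf[OF compact_Icc _ hc] ab by fastforce
  have pint: "integral {a..b} (\<lambda>y. \<bar>p y\<bar>) = integral {a..b} p"
    using p_nonneg by (intro integral_cong) auto
  have pI: "p integrable_on {a..b}" using p_cont integrable_continuous_interval by blast
  have hpI: "(\<lambda>x. h x * p x) integrable_on {a..b}"
    using hc p_cont by (intro integrable_continuous_interval continuous_intros)
  have H0: "h x0 \<le> 0"
  proof (rule ccontr)
    assume "\<not> h x0 \<le> 0"
    then have pos: "h x0 > 0" by simp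
    have "integral {a..b} (\<lambda>x. h x0 * p x) \<le> integral {a..b} (\<lambda>x. h x * p x)"
      using hpI x0min p_nonneg integrable_on_mult_right[OF pI, of "h x0"]
      by (intro integral_le mult_right_mono) auto
    moreover have "integral {a..b} (\<lambda>x. h x0 * p x) = h x0 * integral {a..b} p" by simp
    moreover have "h x0 * integral {a..b} p > 0" using pos p_int_pos pint by simp
    ultimately show False using orth unfolding h_def by simp
  qed
  define P where "P = (SUP x\<in>{a..b}. p x)"
  define S where "S = (SUP x\<in>{a..b}. f' x)"
  have bddp: "bdd_above (p ` {a..b})"
    using p_cont by (intro bounded_imp_bdd_above compact_imp_bounded compact_continuous_image) auto
  have bddf: "bdd_above (f' ` {a..b})"
    using f'_cont by (intro bounded_imp_bdd_above compact_imp_bounded compact_continuous_image) auto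
  have pP: "p x \<le> P" if "x \<in> {a..b}" for x
    unfolding P_def using bddp that by (rule cSUP_upper2) auto
  have P0: "P \<ge> 0" using pP[of a] p_nonneg[of a] ab by auto
  have S0: "S \<ge> 0" unfolding S_def using bddf f'_pos[of a] ab
    by (smt (verit) atLeastAtMost_iff cSUP_upper2)
  have ax0: "a \<le> x0" and x0b: "x0 \<le> b" using x0 by auto
  have L: "integral {a..x0} (\<lambda>x. h x * (h x - h x0) * p x) \<le> P * (max (h a) 0)^2 * (x0-a)"
  proof (rule left_bound[OF ax0])
    show "continuous_on {a..x0} h" using hc x0b by (elim continuous_on_subset) auto
    show "continuous_on {a..x0} p" using p_cont x0b by (elim continuous_on_subset) auto
    show "0 \<le> p x \<and> p x \<le> P" if "x \<in> {a..x0}" for x using that x0b p_nonneg pP by auto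
    show "h x0 \<le> h x" if "x \<in> {a..x0}" for x using that x0b x0min by auto
    show "h x0 \<le> 0" by fact
    show "h x \<le> ((x0 - x) * h a + (x - a) * h x0) / (x0 - a)" if "x \<in> {a..x0}" "a < x0" for x
      using hl[of a x0 x] that x0 ab by auto
  qed
  have R: "integral {x0..b} (\<lambda>x. h x * (h x - h x0) * p x) \<le> P * (max (h b) 0)^2 * (b-x0)"
  proof (rule right_bound[OF x0b])
    show "continuous_on {x0..b} h" using hc ax0 by (elim continuous_on_subset) auto
    show "continuous_on {x0..b} p" using p_cont ax0 by (elim continuous_on_subset) auto
    show "0 \<le> p x \<and> p x \<le> P" if "x \<in> {x0..b}" for x using that ax0 p_nonneg pP by auto
    show "h x0 \<le> h x" if "x \<in> {x0..b}" for x using that ax0 x0min by auto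
    show "h x0 \<le> 0" by fact
    show "h x \<le> ((b - x) * h x0 + (x - x0) * h b) / (b - x0)" if "x \<in> {x0..b}" "x0 < b" for x
      using hl[of x0 b x] that x0 ab by auto
  qed
  define K where "K = (\<lambda>x. h x * (h x - h x0) * p x)"
  have KI: "K integrable_on {a..b}" unfolding K_def
    using hc p_cont by (intro integrable_continuous_interval continuous_intros)
  have h2I: "(\<lambda>x. (h x)^2 * p x) integrable_on {a..b}"
    using hc p_cont by (intro integrable_continuous_interval continuous_intros)
  have "integral {a..b} K = integral {a..b} (\<lambda>x. (h x)^2 * p x - h x0 * (h x * p x))"
    unfolding K_def by (intro integral_cong) (simp add: algebra_simps power2_eq_square)
  also have "\<dots> = integral {a..b} (\<lambda>x. (h x)^2 * p x) - h x0 * integral {a..b} (\<lambda>x. h x * p x)"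
    using Henstock_Kurzweil_Integration.integral_diff[OF h2I integrable_on_mult_right[OF hpI, of "h x0"]]
    by simp
  also have "\<dots> = integral {a..b} (\<lambda>x. (h x)^2 * p x)" using orth unfolding h_def by simp
  finally have KE: "integral {a..b} K = integral {a..b} (\<lambda>x. (h x)^2 * p x)" .
  have "integral {a..b} K = integral {a..x0} K + integral {x0..b} K"
    using Henstock_Kurzweil_Integration.integral_combine[OF ax0 x0b KI] by simp
  also have "\<dots> \<le> P * (max (h a) 0)^2 * (x0-a) + P * (max (h b) 0)^2 * (b-x0)"
    using L R unfolding K_def by linarith
  finally have main: "integral {a..b} (\<lambda>x. (h x)^2 * p x)
      \<le> P * (max (h a) 0)^2 * (x0-a) + P * (max (h b) 0)^2 * (b-x0)" using KE by simp
  define A where "A = {\<bar>f x - g x\<bar> | x. x \<in> {a, b} \<and> g x < f x}"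
  have Afin: "finite A"
    by (rule finite_subset[of _ "{\<bar>f a - g a\<bar>, \<bar>f b - g b\<bar>}"]) (auto simp: A_def)
  have nondeg: "h a > 0 \<or> h b > 0"
  proof (rule ccontr)
    assume "\<not> (h a > 0 \<or> h b > 0)"
    then have ha: "h a \<le> 0" and hb: "h b \<le> 0" by auto
    have hneg: "h x < 0" if "x \<in> {a<..<b}" for x
    proof -
      have "h x < ((b-x)*h a + (x-a)*h b)/(b-a)" using hs[of a b x] that ab by auto
      moreover have "(b-x)*h a + (x-a)*h b \<le> 0" using that ha hb
        by (simp add: add_nonpos_nonpos mult_nonneg_nonpos)
      ultimately show ?thesis using ab by (smt (verit) divide_nonpos_pos)
    qed
    have hle: "h x \<le> 0" if xab: "x \<in> {a..b}" for x
    proof -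
      consider "x = a" | "x = b" | "x \<in> {a<..<b}" using xab by fastforce
      then show ?thesis using ha hb hneg by cases (auto intro: less_imp_le)
    qed
    have z: "- (h x * p x) = 0" if "x \<in> cbox a b" for x
    proof (rule has_integral_0_cbox_imp_0[where f="\<lambda>x. - (h x * p x)"])
      have "continuous_on {a..b} (\<lambda>x. - (h x * p x))"
        using hc p_cont by (intro continuous_intros)
      then show "continuous_on (cbox a b) (\<lambda>x. - (h x * p x))" by simp
      show "0 \<le> - (h x * p x)" if xb: "x \<in> box a b" for x
      proof -
        have "x \<in> {a..b}" using xb by (simp add: box_real)
        then have "h x * p x \<le> 0" using hle p_nonneg by (simp add: mult_nonpos_nonneg)
        then show ?thesis by simp
      qed
      have "((\<lambda>x. h x * p x) has_integral integral {a..b} (\<lambda>x. h x * p x)) {a..b}"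
        by (rule integrable_integral[OF hpI])
      moreover have "integral {a..b} (\<lambda>x. h x * p x) = 0" using orth unfolding h_def .
      ultimately have "((\<lambda>x. h x * p x) has_integral 0) {a..b}" by simp
      from has_integral_neg[OF this]
      show "((\<lambda>x. - (h x * p x)) has_integral 0) (cbox a b)" by simp
      show "box a b \<noteq> {}" using ab by simp
      show "x \<in> cbox a b" by fact
    qed
    have p0: "p x = 0" if "x \<in> {a<..<b}" for x
    proof -
      have "x \<in> cbox a b" using that by auto
      then have "h x * p x = 0" using z by simp
      then show ?thesis using hneg[OF that] by simp
    qed
    have "integral {a..b} (\<lambda>y. \<bar>p y\<bar>) = integral {a..b} (\<lambda>y. 0)"
      by (rule integral_spike[of "{a,b}"]) (auto simp: p0)
    then show False using p_int_pos by simp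
  qed
  define lam where "lam = Max A"
  have lam0: "0 \<le> lam"
  proof -
    from nondeg obtain y where y1: "y \<in> {a,b}" and y2: "h y > 0" by auto
    have "g y < f y" using y2 unfolding h_def by simp
    then have "\<bar>f y - g y\<bar> \<in> A" unfolding A_def using y1 by blast
    then show ?thesis unfolding lam_def using Afin by (meson Max_ge abs_ge_zero order_trans)
  qed
  have Ale: "max (h y) 0 \<le> lam" if "y \<in> {a,b}" for y
  proof (cases "h y > 0")
    case True
    then have "g y < f y" unfolding h_def by simp
    then have "\<bar>f y - g y\<bar> \<in> A" unfolding A_def using that by blast
    then have "\<bar>h y\<bar> \<le> lam" unfolding lam_def h_def using Afin by simp
    then show ?thesis using lam0 by simp
  next
    case False then show ?thesis using lam0 by simp
  qed
  have sa: "(max (h a) 0)^2 \<le> lam^2" using Ale[of a] by (intro power_mono) auto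
  have sb: "(max (h b) 0)^2 \<le> lam^2" using Ale[of b] by (intro power_mono) auto
  have "P * (max (h a) 0)^2 * (x0-a) \<le> P * lam^2 * (x0-a)"
    using sa P0 ax0 by (intro mult_right_mono mult_left_mono) auto
  moreover have "P * (max (h b) 0)^2 * (b-x0) \<le> P * lam^2 * (b-x0)"
    using sb P0 x0b by (intro mult_right_mono mult_left_mono) auto
  ultimately have "integral {a..b} (\<lambda>x. (h x)^2 * p x) \<le> P * lam^2 * (b - a)"
    using main by (simp add: algebra_simps)
  also have "\<dots> \<le> lam * (lam + S) * P * (b - a)"
  proof -
    have "lam^2 \<le> lam * (lam + S)" using lam0 S0 by (simp add: power2_eq_square mult_left_mono)
    then show ?thesis using P0 ab by (simp add: mult_right_mono mult_left_mono mult.assoc mult.left_commute)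
  qed
  finally show ?thesis unfolding lam_def A_def P_def S_def h_def Let_def by simp
qed

end
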